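(* Let $K$ be a $p$-adic field that is Galois over $\mathbb{Q}_p$. For $1\le i\le r$ let $\mathbf{h}_i=(h_{i,\sigma})_{\sigma\in\Gamma_K}$ be a family of integers indexed by $\Gamma_K$, and assume that for each $i$: (a) $\sum_{\sigma\in\Gamma_K}h_{i,\sigma}\neq 0$, and (b) $h_{i,\sigma}\ne h_{i,\tau}$ for some $\sigma,\tau\in\Gamma_K$. Then there exists $\omega\in\ker(\mathrm{Nr}_{K/\mathbb{Q}_p}\colon \mathcal{O}_K^\times\to\mathbb{Z}_p^\times)$ such that $\psi_{\mathbf{h}_1}(\omega),\dots,\psi_{\mathbf{h}_r}(\omega)$ all have infinite order.
   Context: $\Gamma_K$ is the set of $\mathbb{Q}_p$-algebra embeddings $K\to\overline{\mathbb{Q}}_p$; since $K/\mathbb{Q}_p$ is Galois these are automorphisms of $K$, so $\sigma^{-1}x\in K$ makes sense. For a family of integers $\mathbf{h}=(h_\sigma)_{\sigma\in\Gamma_K}$, the continuous character $\psi_{\mathbf{h}}\colon\mathcal{O}_K^\times\to\mathcal{O}_K^\times$ is defined by $\psi_{\mathbf{h}}(x)=\prod_{\sigma\in\Gamma_K}(\sigma^{-1}x)^{-h_\sigma}$. $\mathcal{O}_K$ is the ring of integers of $K$. *)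

theory Defs
  imports Complex_Main "HOL-Computational_Algebra.Primes"
begin

text \<open>A field K (the whole type 'a) of characteristic 0 with a non-archimedean absolute
  value absv.  Q_p is realised inside K as the closure of the rationals.\<close>

definition nonarch_absval :: "('a::field_char_0 \<Rightarrow> real) \<Rightarrow> bool" where
  "nonarch_absval absv \<longleftrightarrow>
     (\<forall>x. absv x \<ge> 0) \<and> (\<forall>x. absv x = 0 \<longleftrightarrow> x = 0) \<and>
     (\<forall>x y. absv (x * y) = absv x * absv y) \<and>
     (\<forall>x y. absv (x + y) \<le> max (absv x) (absv y))"

definition absv_complete :: "('a::field_char_0 \<Rightarrow> real) \<Rightarrow> bool" where
  "absv_complete absv \<longleftrightarrow>
     (\<forall>X::nat \<Rightarrow> 'a. (\<forall>e>0. \<exists>N. \<forall>m\<ge>N. \<forall>n\<ge>N. absv (X m - X n) < e)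
        \<longrightarrow> (\<exists>L. (\<lambda>n. absv (X n - L)) \<longlonglongrightarrow> 0))"

definition Qp_in :: "('a::field_char_0 \<Rightarrow> real) \<Rightarrow> 'a set" where
  "Qp_in absv = {x. \<exists>q::nat \<Rightarrow> rat. (\<lambda>n. absv (of_rat (q n) - x)) \<longlonglongrightarrow> 0}"

definition finite_over :: "'a::field_char_0 set \<Rightarrow> bool" where
  "finite_over F \<longleftrightarrow> (\<exists>B. finite B \<and>
     (\<forall>x. \<exists>c. (\<forall>b\<in>B. c b \<in> F) \<and> x = (\<Sum>b\<in>B. c b * b)))"

text \<open>K is a p-adic field: a finite extension of Q_p, where the absolute value extends
  (a power of) the p-adic one (absv p < 1) and K is complete.\<close>
definition padic_field :: "nat \<Rightarrow> ('a::field_char_0 \<Rightarrow> real) \<Rightarrow> bool" where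
  "padic_field p absv \<longleftrightarrow> prime p \<and> nonarch_absval absv \<and> absv (of_nat p) < 1 \<and>
     absv_complete absv \<and> finite_over (Qp_in absv)"

definition field_aut :: "('a::field \<Rightarrow> 'a) \<Rightarrow> bool" where
  "field_aut \<sigma> \<longleftrightarrow> bij \<sigma> \<and> (\<forall>x y. \<sigma> (x + y) = \<sigma> x + \<sigma> y) \<and>
     (\<forall>x y. \<sigma> (x * y) = \<sigma> x * \<sigma> y) \<and> \<sigma> 1 = 1"

text \<open>Gamma_K: automorphisms of K over Q_p (for Galois K these are exactly the
  Q_p-embeddings K \<rightarrow> \<bar>Q_p).\<close>
definition Gal :: "('a::field_char_0 \<Rightarrow> real) \<Rightarrow> ('a \<Rightarrow> 'a) set" where
  "Gal absv = {\<sigma>. field_aut \<sigma> \<and> (\<forall>x\<in>Qp_in absv. \<sigma> x = x)}"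

definition galois_over_Qp :: "('a::field_char_0 \<Rightarrow> real) \<Rightarrow> bool" where
  "galois_over_Qp absv \<longleftrightarrow> {x. \<forall>\<sigma>\<in>Gal absv. \<sigma> x = x} = Qp_in absv"

definition OK_units :: "('a::field_char_0 \<Rightarrow> real) \<Rightarrow> 'a set" where
  "OK_units absv = {x. absv x = 1}"

definition norm_KQp :: "('a::field_char_0 \<Rightarrow> real) \<Rightarrow> 'a \<Rightarrow> 'a" where
  "norm_KQp absv x = (\<Prod>\<sigma>\<in>Gal absv. \<sigma> x)"

definition psi :: "('a::field_char_0 \<Rightarrow> real) \<Rightarrow> (('a \<Rightarrow> 'a) \<Rightarrow> int) \<Rightarrow> 'a \<Rightarrow> 'a" where
  "psi absv h x = (\<Prod>\<sigma>\<in>Gal absv. (inv \<sigma> x) powi (- h \<sigma>))"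

definition infinite_order :: "'a::monoid_mult \<Rightarrow> bool" where
  "infinite_order y \<longleftrightarrow> (\<forall>n::nat. n > 0 \<longrightarrow> y ^ n \<noteq> 1)"

end

theory Submission
  imports Defs
begin


lemma na_nonneg: "nonarch_absval absv \<Longrightarrow> absv x \<ge> 0"
  by (simp add: nonarch_absval_def)
lemma na_zero_iff: "nonarch_absval absv \<Longrightarrow> absv x = 0 \<longleftrightarrow> x = 0"
  by (simp add: nonarch_absval_def)
lemma na_mult: "nonarch_absval absv \<Longrightarrow> absv (x * y) = absv x * absv y"
  by (simp add: nonarch_absval_def)
lemma na_add: "nonarch_absval absv \<Longrightarrow> absv (x + y) \<le> max (absv x) (absv y)"
  by (simp add: nonarch_absval_def)

lemma na_one: assumes "nonarch_absval absv" shows "absv 1 = 1"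
proof -
  have "absv 1 = absv 1 * absv 1" using na_mult[OF assms, of 1 1] by simp
  moreover have "absv 1 \<noteq> 0" using na_zero_iff[OF assms, of 1] by simp
  ultimately show ?thesis by (metis mult_cancel_left1)
qed

lemma sq_one_nonneg: "(a::real) * a = 1 \<Longrightarrow> a \<ge> 0 \<Longrightarrow> a = 1"
proof -
  assume h: "a * a = 1" "a \<ge> 0"
  then have "(a - 1) * (a + 1) = 0" by (simp add: algebra_simps)
  then show "a = 1" using h(2) by simp
qed

lemma na_uminus: assumes "nonarch_absval absv" shows "absv (- x) = absv x"
proof -
  have "absv (-1) * absv (-1) = 1" using na_mult[OF assms, of "-1" "-1"] na_one[OF assms] by simp
  moreover have "absv (-1) \<ge> 0" using na_nonneg[OF assms] .
  ultimately have "absv (-1) = 1" using sq_one_nonneg by blast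
  then show ?thesis using na_mult[OF assms, of "-1" x] by simp
qed

lemma na_diff: assumes "nonarch_absval absv" shows "absv (x - y) \<le> max (absv x) (absv y)"
  using na_add[OF assms, of x "-y"] na_uminus[OF assms, of y] by simp

lemma na_add_le: assumes "nonarch_absval absv" "absv x \<le> M" "absv y \<le> M" shows "absv (x + y) \<le> M"
  using na_add[OF assms(1), of x y] assms by simp

lemma na_diff_le: assumes "nonarch_absval absv" "absv x \<le> M" "absv y \<le> M" shows "absv (x - y) \<le> M"
  using na_diff[OF assms(1), of x y] assms by simp

lemma na_sum_le: assumes "nonarch_absval absv" "\<And>i. i \<in> S \<Longrightarrow> absv (f i) \<le> M" "M \<ge> 0"
  shows "absv (sum f S) \<le> M"
  using assms(2)
proof (induction S rule: infinite_finite_induct)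
  case (infinite A) then show ?case using assms na_zero_iff[OF assms(1), of 0] by simp
next
  case empty then show ?case using assms na_zero_iff[OF assms(1), of 0] by simp
next
  case (insert x F) then show ?case using na_add_le[OF assms(1)] by simp
qed

lemma na_power: assumes "nonarch_absval absv" shows "absv (x ^ n) = absv x ^ n"
  by (induction n) (simp_all add: na_one[OF assms] na_mult[OF assms])

lemma na_inverse: assumes "nonarch_absval absv" shows "absv (inverse x) = inverse (absv x)"
proof (cases "x = 0")
  case True then show ?thesis using na_zero_iff[OF assms, of 0] by simp
next
  case False
  then have "absv (inverse x) * absv x = 1" using na_mult[OF assms, of "inverse x" x] na_one[OF assms] by simp
  then show ?thesis using inverse_unique[of "absv x" "absv (inverse x)"] by (simp add: mult.commute)
qed

lemma na_of_nat: assumes "nonarch_absval absv" shows "absv (of_nat n) \<le> 1"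
proof (induction n)
  case 0 then show ?case using na_zero_iff[OF assms, of 0] by simp
next
  case (Suc n)
  have "absv (1 + of_nat n) \<le> 1" by (rule na_add_le[OF assms]) (simp_all add: na_one[OF assms] Suc)
  then show ?case by simp
qed

lemma na_of_int: assumes "nonarch_absval absv" shows "absv (of_int k) \<le> 1"
  by (cases k rule: int_cases) (simp_all add: na_of_nat[OF assms] na_uminus[OF assms] del: of_nat_Suc)

lemma na_dominant: assumes "nonarch_absval absv" "absv e < absv d" shows "absv (d + e) = absv d"
proof -
  have "absv (d + e) \<le> absv d" using na_add[OF assms(1), of d e] assms by simp
  moreover have "absv d \<le> max (absv (d + e)) (absv e)" using na_diff[OF assms(1), of "d+e" e] by simp
  ultimately show ?thesis using assms by linarith
qed

lemma na_one_plus: assumes "nonarch_absval absv" "absv u < 1" shows "absv (1 + u) = 1"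
  using na_dominant[OF assms(1), of u 1] assms na_one[OF assms(1)] by simp

lemma na_zero: "nonarch_absval absv \<Longrightarrow> absv 0 = 0"
  by (simp add: na_zero_iff)

section \<open>Field automorphisms\<close>

lemma fa_add: "field_aut s \<Longrightarrow> s (x + y) = s x + s y" by (simp add: field_aut_def)
lemma fa_mult: "field_aut s \<Longrightarrow> s (x * y) = s x * s y" by (simp add: field_aut_def)
lemma fa_one: "field_aut s \<Longrightarrow> s 1 = 1" by (simp add: field_aut_def)
lemma fa_bij: "field_aut s \<Longrightarrow> bij s" by (simp add: field_aut_def)
lemma fa_zero: assumes "field_aut s" shows "s 0 = 0"
proof -
  have "s 0 + s 0 = s 0 + 0" using fa_add[OF assms, of 0 0] by simp
  then show ?thesis by (rule add_left_imp_eq)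
qed
lemma fa_uminus: assumes "field_aut s" shows "s (- x) = - s x"
  using fa_add[OF assms, of x "-x"] fa_zero[OF assms] by (metis minus_unique add.right_inverse)
lemma fa_diff: assumes "field_aut s" shows "s (x - y) = s x - s y"
  using fa_add[OF assms, of x "-y"] fa_uminus[OF assms, of y] by simp
lemma fa_of_nat: assumes "field_aut s" shows "s (of_nat n) = of_nat n"
  by (induction n) (simp_all add: fa_zero[OF assms] fa_one[OF assms] fa_add[OF assms])
lemma fa_power: assumes "field_aut s" shows "s (x ^ n) = s x ^ n"
  by (induction n) (simp_all add: fa_one[OF assms] fa_mult[OF assms])
lemma fa_inverse: assumes "field_aut s" shows "s (inverse x) = inverse (s x)"
proof (cases "x = 0")
  case True then show ?thesis by (simp add: fa_zero[OF assms])
next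
  case False
  then have "s x * s (inverse x) = 1" using fa_mult[OF assms, of x "inverse x"] fa_one[OF assms] by simp
  then show ?thesis using inverse_unique by metis
qed
lemma fa_prod: assumes "field_aut s" shows "s (prod f A) = (\<Prod>a\<in>A. s (f a))"
  by (induction A rule: infinite_finite_induct) (simp_all add: fa_one[OF assms] fa_mult[OF assms])

lemma fa_inv: assumes "field_aut s" shows "field_aut (inv s)"
proof -
  have b: "bij s" using fa_bij[OF assms] .
  have i: "\<And>z. inv s (s z) = z" using b by (simp add: bij_is_inj)
  have f: "\<And>z. s (inv s z) = z" using b by (simp add: bij_is_surj surj_f_inv_f)
  have "inv s (x + y) = inv s x + inv s y" for x y
    using i[of "inv s x + inv s y"] by (simp add: fa_add[OF assms] f)
  moreover have "inv s (x * y) = inv s x * inv s y" for x y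
    using i[of "inv s x * inv s y"] by (simp add: fa_mult[OF assms] f)
  moreover have "inv s 1 = 1" using i[of 1] fa_one[OF assms] by simp
  ultimately show ?thesis using bij_imp_bij_inv[OF b] by (simp add: field_aut_def)
qed

lemma fa_comp: assumes "field_aut s" "field_aut u" shows "field_aut (s \<circ> u)"
  using assms by (simp add: field_aut_def bij_comp)

lemma Gal_fa: "s \<in> Gal absv \<Longrightarrow> field_aut s" by (simp add: Gal_def)

lemma Gal_inv: assumes "s \<in> Gal absv" shows "inv s \<in> Gal absv"
proof -
  have fs: "field_aut s" using assms by (simp add: Gal_def)
  have "inv s x = x" if "x \<in> Qp_in absv" for x
  proof -
    have "s x = x" using assms that by (simp add: Gal_def)
    then show ?thesis using fa_bij[OF fs] by (metis bij_is_inj inv_f_f)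
  qed
  then show ?thesis using fa_inv[OF fs] by (simp add: Gal_def)
qed

lemma Gal_comp: assumes "s \<in> Gal absv" "u \<in> Gal absv" shows "s \<circ> u \<in> Gal absv"
  using assms fa_comp by (auto simp: Gal_def)

lemma Gal_id: "id \<in> Gal absv"
  by (simp add: Gal_def field_aut_def)

lemma Gal_inv_inv: "s \<in> Gal absv \<Longrightarrow> inv (inv s) = s"
  using Gal_fa fa_bij inv_inv_eq by blast

lemma Gal_lmult_bij: assumes "s \<in> Gal absv" shows "bij_betw ((\<circ>) s) (Gal absv) (Gal absv)"
proof -
  have fs: "field_aut s" using assms by (rule Gal_fa)
  have inj: "inj s" using fa_bij[OF fs] bij_is_inj by blast
  have "inj_on ((\<circ>) s) (Gal absv)"
    by (rule inj_onI) (metis fun.inj_map_strong inj_eq inj)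
  moreover have "(\<circ>) s ` Gal absv = Gal absv"
  proof
    show "(\<circ>) s ` Gal absv \<subseteq> Gal absv" using Gal_comp[OF assms] by blast
    show "Gal absv \<subseteq> (\<circ>) s ` Gal absv"
    proof
      fix u assume u: "u \<in> Gal absv"
      have "u = s \<circ> (inv s \<circ> u)" using fa_bij[OF fs]
        by (simp add: fun_eq_iff bij_is_surj surj_f_inv_f)
      moreover have "inv s \<circ> u \<in> Gal absv" using Gal_comp[OF Gal_inv[OF assms] u] .
      ultimately show "u \<in> (\<circ>) s ` Gal absv" by blast
    qed
  qed
  ultimately show ?thesis by (simp add: bij_betw_def)
qed

lemma Gal_inv_bij: "bij_betw inv (Gal absv) (Gal absv)"
proof -
  have "inj_on inv (Gal absv)"
    by (rule inj_onI) (metis Gal_inv_inv)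
  moreover have "inv ` Gal absv = Gal absv"
  proof
    show "inv ` Gal absv \<subseteq> Gal absv" using Gal_inv by blast
    show "Gal absv \<subseteq> inv ` Gal absv"
    proof
      fix u assume "u \<in> Gal absv"
      then show "u \<in> inv ` Gal absv" using Gal_inv Gal_inv_inv image_eqI by metis
    qed
  qed
  ultimately show ?thesis by (simp add: bij_betw_def)
qed

lemma Gal_sum_lmult: "s \<in> Gal absv \<Longrightarrow> (\<Sum>u\<in>Gal absv. F (s \<circ> u)) = (\<Sum>u\<in>Gal absv. F u)"
  using sum.reindex_bij_betw[OF Gal_lmult_bij] by blast
lemma Gal_prod_lmult: "s \<in> Gal absv \<Longrightarrow> (\<Prod>u\<in>Gal absv. F (s \<circ> u)) = (\<Prod>u\<in>Gal absv. F u)"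
  using prod.reindex_bij_betw[OF Gal_lmult_bij] by blast
lemma Gal_sum_inv: "(\<Sum>u\<in>Gal absv. F (inv u)) = (\<Sum>u\<in>Gal absv. F u)"
  using sum.reindex_bij_betw[OF Gal_inv_bij] by blast



definition ap :: "('a::field_char_0 \<Rightarrow> real) \<Rightarrow> real \<Rightarrow> 'a \<Rightarrow> 'a \<Rightarrow> bool" where
  "ap absv d A a \<longleftrightarrow> absv (A - 1 - a) \<le> d^2 \<and> absv a \<le> d"

locale apx =
  fixes absv :: "'a::field_char_0 \<Rightarrow> real" and d :: real
  assumes na: "nonarch_absval absv" and d0: "0 \<le> d" and d1: "d < 1"
begin

lemma prod_bound: "absv x \<le> a \<Longrightarrow> absv y \<le> b \<Longrightarrow> absv (x * y) \<le> a * b"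
  using na_mult[OF na, of x y] na_nonneg[OF na] by (simp add: mult_mono')

lemma ap_one: "ap absv d 1 0"
  using d0 by (simp add: ap_def na_zero[OF na])

lemma ap_base: "absv u \<le> d \<Longrightarrow> ap absv d (1 + u) u"
  using d0 by (simp add: ap_def na_zero[OF na])

lemma d2: "d * d \<le> d" "d * d ^ 2 \<le> d ^ 2" "d ^ 2 * d ^ 2 \<le> d ^ 2" "d * d = d ^ 2"
  using d0 d1 by (auto simp: power2_eq_square mult_le_cancel_right1 mult_left_le_one_le mult_le_one)

lemma ap_mult:
  assumes "ap absv d A a" "ap absv d B b" shows "ap absv d (A * B) (a + b)"
proof -
  define E where "E = A - 1 - a"
  define F where "F = B - 1 - b"
  have hE: "absv E \<le> d^2" and ha: "absv a \<le> d" using assms(1) by (auto simp: ap_def E_def)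
  have hF: "absv F \<le> d^2" and hb: "absv b \<le> d" using assms(2) by (auto simp: ap_def F_def)
  have eq: "A * B - 1 - (a + b) = F + a * b + a * F + E + E * b + E * F"
    unfolding E_def F_def by (simp add: algebra_simps)
  have b1: "absv (a * b) \<le> d^2" using prod_bound[OF ha hb] d2 by simp
  have b2: "absv (a * F) \<le> d^2" using prod_bound[OF ha hF] d2 by simp
  have b3: "absv (E * b) \<le> d^2" using prod_bound[OF hE hb] d2 by (simp add: mult.commute)
  have b4: "absv (E * F) \<le> d^2" using prod_bound[OF hE hF] d2 by simp
  have "absv (A * B - 1 - (a + b)) \<le> d^2"
    unfolding eq by (intro na_add_le[OF na] hE hF b1 b2 b3 b4)
  moreover have "absv (a + b) \<le> d" by (intro na_add_le[OF na] ha hb)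
  ultimately show ?thesis by (simp add: ap_def)
qed

lemma ap_abs1: assumes "ap absv d A a" shows "absv A = 1"
proof -
  have "absv (a + (A - 1 - a)) \<le> d"
    using assms d2 by (intro na_add_le[OF na]) (auto simp: ap_def)
  then have "absv (A - 1) < 1" using d1 by simp
  then have "absv (1 + (A - 1)) = 1" by (rule na_one_plus[OF na])
  then show ?thesis by simp
qed

lemma ap_inv: assumes "ap absv d A a" shows "ap absv d (inverse A) (- a)"
proof -
  have A1: "absv A = 1" using ap_abs1[OF assms] .
  then have A0: "A \<noteq> 0" using na_zero[OF na] by auto
  define E where "E = A - 1 - a"
  have hE: "absv E \<le> d^2" and ha: "absv a \<le> d" using assms by (auto simp: ap_def E_def)
  have eq: "inverse A - 1 - (- a) = (- E + a * a + a * E) * inverse A"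
    unfolding E_def using A0 by (simp add: field_simps)
  have "absv (- E + a * a + a * E) \<le> d^2"
    using prod_bound[OF ha ha] prod_bound[OF ha hE] d2 hE
    by (intro na_add_le[OF na]) (auto simp: na_uminus[OF na])
  then have "absv (inverse A - 1 - (- a)) \<le> d^2"
    unfolding eq using na_mult[OF na] na_inverse[OF na] A1 by simp
  then show ?thesis using ha by (simp add: ap_def na_uminus[OF na])
qed

lemma ap_pow: assumes "ap absv d A a" shows "ap absv d (A ^ n) (of_nat n * a)"
proof (induction n)
  case 0 then show ?case using ap_one by simp
next
  case (Suc n)
  have "ap absv d (A ^ n * A) (of_nat n * a + a)" by (rule ap_mult[OF Suc assms])
  then show ?case by (simp add: algebra_simps)
qed

lemma ap_powi: assumes "ap absv d A a" shows "ap absv d (A powi k) (of_int k * a)"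
proof (cases "k \<ge> 0")
  case True
  then have "A powi k = A ^ nat k" "of_int k = (of_nat (nat k) :: 'a)" by (simp_all add: power_int_def)
  then show ?thesis using ap_pow[OF assms, of "nat k"] by simp
next
  case False
  then have "A powi k = inverse A ^ nat (-k)" "of_int k * a = of_nat (nat (-k)) * (- a)"
    by (simp_all add: power_int_def)
  then show ?thesis using ap_pow[OF ap_inv[OF assms], of "nat (-k)"] by simp
qed

lemma ap_prod: assumes "\<And>j. j \<in> S \<Longrightarrow> ap absv d (A j) (a j)"
  shows "ap absv d (prod A S) (sum a S)"
  using assms
proof (induction S rule: infinite_finite_induct)
  case (infinite A) then show ?case using ap_one by simp
next
  case empty then show ?case using ap_one by simp
next
  case (insert x F) then show ?case using ap_mult by simp
qed

end

section \<open>No torsion near 1\<close>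

lemma na_coprime_unit:
  assumes na: "nonarch_absval absv" and p: "prime p" and pl: "absv (of_nat p :: 'a::field_char_0) < 1"
    and nd: "\<not> p dvd k"
  shows "absv (of_nat k :: 'a) = 1"
proof -
  have "coprime (int p) (int k)" using p nd
    by (simp add: prime_imp_coprime)
  then have "gcd (int p) (int k) = 1" by simp
  then obtain u v where uv: "u * int p + v * int k = 1" using bezout_int by metis
  then have "(of_int u * of_nat p + of_int v * of_nat k :: 'a) = 1"
    by (metis (mono_tags, opaque_lifting) of_int_1 of_int_add of_int_mult of_int_of_nat_eq)
  then have "1 \<le> max (absv (of_int u * of_nat p :: 'a)) (absv (of_int v * of_nat k :: 'a))"
    using na_add[OF na] na_one[OF na] by metis
  moreover have "absv (of_int u * of_nat p :: 'a) < 1"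
    using na_mult[OF na] na_of_int[OF na, of u] na_nonneg[OF na] pl
    by (metis less_le_trans mult_left_le_one_le order.strict_implies_order linorder_not_less)
  ultimately have "1 \<le> absv (of_int v * of_nat k :: 'a)" by linarith
  moreover have "absv (of_int v * of_nat k :: 'a) \<le> absv (of_nat k :: 'a)"
    using na_mult[OF na] na_of_int[OF na, of v] na_nonneg[OF na] by (simp add: mult_left_le_one_le)
  ultimately show ?thesis using na_of_nat[OF na, of k] by linarith
qed

lemma pow_close:
  assumes na: "nonarch_absval absv" and z: "absv (z - 1) < 1"
  shows "absv (z ^ j - 1) \<le> absv (z - 1)"
proof (induction j)
  case 0 then show ?case using na_zero[OF na] na_nonneg[OF na] by simp
next
  case (Suc j)
  have zabs: "absv z = 1" using na_one_plus[OF na z] by simp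
  have e: "z ^ Suc j - 1 = z * (z ^ j - 1) + (z - 1)" by (simp add: algebra_simps)
  have h: "absv (z * (z ^ j - 1)) \<le> absv (z - 1)" using Suc na_mult[OF na] zabs by simp
  show ?case unfolding e by (rule na_add_le[OF na h order_refl])
qed

lemma step1:
  assumes na: "nonarch_absval absv" and p: "prime p" and pl: "absv (of_nat p :: 'a::field_char_0) < 1"
    and nd: "\<not> p dvd k" and z: "absv (z - 1) < (1::real)"
  shows "absv (z ^ k - 1) = absv (z - (1::'a))"
proof -
  define S where "S = (\<Sum>i<k. z ^ i)"
  have eq: "z ^ k - 1 = (z - 1) * S" unfolding S_def by (rule power_diff_1_eq)
  have "S = of_nat k + (\<Sum>i<k. z ^ i - 1)" unfolding S_def by (simp add: sum_subtractf)
  moreover have "absv (\<Sum>i<k. z ^ i - 1) < absv (of_nat k :: 'a)"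
  proof -
    have "absv (\<Sum>i<k. z ^ i - 1) \<le> absv (z - 1)"
      by (rule na_sum_le[OF na]) (auto simp: pow_close[OF na z] na_nonneg[OF na])
    then show ?thesis using na_coprime_unit[OF na p pl nd] z by simp
  qed
  ultimately have "absv S = 1" using na_dominant[OF na] na_coprime_unit[OF na p pl nd] by simp
  then show ?thesis using eq na_mult[OF na] by simp
qed

lemma step2:
  assumes na: "nonarch_absval absv" and p: "prime p"
    and w0: "0 < absv (w - 1)" and wp: "absv (w - 1) < absv (of_nat p :: 'a::field_char_0)"
    and pl: "absv (of_nat p :: 'a) < 1"
  shows "absv (w ^ p - 1) = absv (of_nat p :: 'a) * absv (w - 1)"
proof -
  define d where "d = w - 1"
  define eta where "eta = absv d"
  have p2: "p \<ge> 2" using p prime_ge_2_nat by blast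
  define f where "f k = of_nat (p choose k) * d ^ k * 1 ^ (p - k)" for k
  have "w ^ p = (d + 1) ^ p" by (simp add: d_def)
  also have "\<dots> = sum f {0..p}" unfolding f_def by (simp add: binomial_ring atLeast0AtMost)
  also have "\<dots> = f 0 + (f 1 + sum f {2..p})"
    using p2 by (simp add: sum.atLeast_Suc_atMost numeral_2_eq_2)
  finally have "w ^ p - 1 = of_nat p * d + sum f {2..p}" by (simp add: f_def)
  moreover have "absv (sum f {2..p}) < absv (of_nat p * d)"
  proof -
    have e1: "eta < 1" using wp pl by (simp add: eta_def d_def)
    have e0: "0 < eta" using w0 by (simp add: eta_def d_def)
    have "absv (sum f {2..p}) \<le> eta ^ 2"
    proof (rule na_sum_le[OF na])
      fix k assume k: "k \<in> {2..p}"
      have "absv (f k) = absv (of_nat (p choose k) :: 'a) * eta ^ k"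
        by (simp add: f_def na_mult[OF na] na_power[OF na] eta_def)
      also have "\<dots> \<le> eta ^ k"
        using na_of_nat[OF na, of "p choose k"] e0 by (simp add: mult_left_le_one_le)
      also have "\<dots> \<le> eta ^ 2" using k e0 e1 by (intro power_decreasing) auto
      finally show "absv (f k) \<le> eta ^ 2" .
    qed simp
    also have "eta ^ 2 < absv (of_nat p :: 'a) * eta"
      using wp e0 by (simp add: power2_eq_square eta_def d_def)
    finally show ?thesis by (simp add: na_mult[OF na] eta_def)
  qed
  ultimately show ?thesis using na_dominant[OF na] na_mult[OF na] by (simp add: d_def)
qed

lemma no_torsion_aux:
  assumes na: "nonarch_absval absv" and p: "prime p" and pl: "absv (of_nat p :: 'a::field_char_0) < 1"
    and z0: "0 < absv (z - 1)" and zp: "absv (z - 1) < absv (of_nat p :: 'a)"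
  shows "m > 0 \<Longrightarrow> 0 < absv (z ^ m - 1) \<and> absv (z ^ m - 1) < absv (of_nat p :: 'a)"
proof (induction m rule: less_induct)
  case (less m)
  show ?case
  proof (cases "p dvd m")
    case False
    have "absv (z - 1) < 1" using zp pl by simp
    then show ?thesis using step1[OF na p pl False] z0 zp by simp
  next
    case True
    then obtain m' where m': "m = p * m'" by blast
    have p2: "p \<ge> 2" using p prime_ge_2_nat by blast
    have "m' > 0" using less.prems m' by simp
    moreover have "m' < m" using m' p2 less.prems by simp
    ultimately have IH: "0 < absv (z ^ m' - 1)" "absv (z ^ m' - 1) < absv (of_nat p :: 'a)"
      using less.IH by auto
    have "z ^ m = (z ^ m') ^ p" by (simp add: m' power_mult mult.commute)
    then have eq: "absv (z ^ m - 1) = absv (of_nat p :: 'a) * absv (z ^ m' - 1)"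
      using step2[OF na p IH pl] by simp
    have pp: "0 < absv (of_nat p :: 'a)" using na_zero_iff[OF na, of "of_nat p"] na_nonneg[OF na, of "of_nat p"] p2 by auto
    have "absv (z ^ m' - 1) < 1" using IH pl by simp
    then show ?thesis unfolding eq using IH pp by (simp add: mult_less_cancel_left2)
  qed
qed

lemma no_torsion:
  assumes na: "nonarch_absval absv" and p: "prime p" and pl: "absv (of_nat p :: 'a::field_char_0) < 1"
    and z0: "0 < absv (z - 1)" and zp: "absv (z - 1) < absv (of_nat p :: 'a)"
  shows "infinite_order z"
  unfolding infinite_order_def
proof (intro allI impI)
  fix n :: nat assume "n > 0"
  then have "0 < absv (z ^ n - 1)" using no_torsion_aux[OF assms] by blast
  then show "z ^ n \<noteq> 1" using na_zero[OF na] by auto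
qed

lemma dedekind:
  fixes S :: "('a::field \<Rightarrow> 'a) set"
  assumes "finite S" "\<And>s x y. s \<in> S \<Longrightarrow> s (x * y) = s x * s y" "\<And>s. s \<in> S \<Longrightarrow> s 1 = 1"
    and "\<And>y. (\<Sum>s\<in>S. c s * s y) = 0"
  shows "\<forall>s\<in>S. c s = 0"
  using assms
proof (induction S arbitrary: c rule: finite_induct)
  case empty then show ?case by simp
next
  case (insert t S)
  have H: "c t * t y + (\<Sum>s\<in>S. c s * s y) = 0" for y
    using insert.prems(3)[of y] insert.hyps by simp
  have cS: "\<forall>s\<in>S. c s = 0"
  proof
    fix s assume sS: "s \<in> S"
    have "s \<noteq> t" using sS insert.hyps by auto
    then obtain z where z: "s z \<noteq> t z" by (meson ext)
    have "\<forall>u\<in>S. c u * (u z - t z) = 0"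
    proof (rule insert.IH)
      show "\<And>s x y. s \<in> S \<Longrightarrow> s (x * y) = s x * s y" using insert.prems by auto
      show "\<And>s. s \<in> S \<Longrightarrow> s 1 = 1" using insert.prems by auto
      fix y
      have h1: "c t * (t z * t y) + (\<Sum>s\<in>S. c s * (s z * s y)) = 0"
        using H[of "z * y"] insert.prems(1) by simp
      have h2: "t z * (c t * t y + (\<Sum>s\<in>S. c s * s y)) = 0" using H[of y] by simp
      have "(\<Sum>u\<in>S. c u * (u z - t z) * u y) =
            (c t * (t z * t y) + (\<Sum>s\<in>S. c s * (s z * s y))) - t z * (c t * t y + (\<Sum>s\<in>S. c s * s y))"
        by (simp add: algebra_simps sum_subtractf sum_distrib_left)
      then show "(\<Sum>u\<in>S. c u * (u z - t z) * u y) = 0" using h1 h2 by simp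
    qed
    then show "c s = 0" using sS z by auto
  qed
  then have "c t = 0" using H[of 1] insert.prems(2)[of t] by simp
  then show ?case using cS by simp
qed

section \<open>Avoiding finitely many kernels\<close>

lemma avoid:
  fixes L :: "'i \<Rightarrow> 'a::field_char_0 \<Rightarrow> 'a"
  assumes "finite I" "\<And>i. i \<in> I \<Longrightarrow> \<exists>v. L i v \<noteq> 0"
    and lin: "\<And>i y v m. L i (y + of_nat m * v) = L i y + of_nat m * L i v"
  shows "\<exists>y. \<forall>i\<in>I. L i y \<noteq> 0"
  using assms(1,2)
proof (induction I rule: finite_induct)
  case empty then show ?case by simp
next
  case (insert j I)
  obtain y where y: "\<forall>i\<in>I. L i y \<noteq> 0" using insert by auto
  obtain v where v: "L j v \<noteq> 0" using insert.prems by auto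
  define Bad where "Bad i = {m::nat. L i y + of_nat m * L i v = 0}" for i
  have fin: "finite (Bad i)" if "i \<in> insert j I" for i
  proof -
    have "m1 = m2" if "m1 \<in> Bad i" "m2 \<in> Bad i" for m1 m2
    proof (cases "L i v = 0")
      case True
      then have "L i y = 0" using that by (auto simp: Bad_def split: if_splits)
      then have "i = j" using y \<open>i \<in> insert j I\<close> by auto
      then show ?thesis using True v by simp
    next
      case False
      have q1: "L i y + of_nat m1 * L i v = 0" using that(1) unfolding Bad_def by (rule CollectD)
      have q2: "L i y + of_nat m2 * L i v = 0" using that(2) unfolding Bad_def by (rule CollectD)
      have "of_nat m1 * L i v = (of_nat m2 * L i v :: 'a)" proof -
        from q1 q2 have "L i y + of_nat m1 * L i v = L i y + of_nat m2 * L i v" by simp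
        then show ?thesis by simp
      qed
      then show ?thesis using False by auto
    qed
    then show ?thesis
      by (metis finite.emptyI finite_insert finite_subset insertI1 subsetI singleton_iff ex_in_conv)
  qed
  have "finite (\<Union>i\<in>insert j I. Bad i)" using fin insert.hyps(1) by blast
  then obtain m where m: "m \<notin> (\<Union>i\<in>insert j I. Bad i)"
    using ex_new_if_finite[OF infinite_UNIV_nat] by blast
  show ?case
    by (rule exI[of _ "y + of_nat m * v"]) (use m in \<open>auto simp: Bad_def lin\<close>)
qed



lemma na_prod: assumes "nonarch_absval absv" shows "absv (prod f A) = (\<Prod>a\<in>A. absv (f a))"
  by (induction A rule: infinite_finite_induct) (simp_all add: na_one[OF assms] na_mult[OF assms])

theorem lemma2p3:
  fixes p :: nat and absv :: "'a::field_char_0 \<Rightarrow> real"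
    and r :: nat and h :: "nat \<Rightarrow> ('a \<Rightarrow> 'a) \<Rightarrow> int"
  assumes "padic_field p absv"
    and "galois_over_Qp absv"
    and "\<And>i. i \<in> {1..r} \<Longrightarrow> (\<Sum>\<sigma>\<in>Gal absv. h i \<sigma>) \<noteq> 0"
    and "\<And>i. i \<in> {1..r} \<Longrightarrow> \<exists>\<sigma>\<in>Gal absv. \<exists>\<tau>\<in>Gal absv. h i \<sigma> \<noteq> h i \<tau>"
  shows "\<exists>\<omega>\<in>OK_units absv. norm_KQp absv \<omega> = 1 \<and>
           (\<forall>i\<in>{1..r}. infinite_order (psi absv (h i) \<omega>))"
proof -
  have na: "nonarch_absval absv" and p: "prime p" and pl: "absv (of_nat p :: 'a) < 1"
    using assms(1) by (auto simp: padic_field_def)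
  define G where "G = Gal absv"
  have fa: "\<And>s. s \<in> G \<Longrightarrow> field_aut s" unfolding G_def by (rule Gal_fa)
  show ?thesis
  proof (cases "r = 0")
    case True
    have "norm_KQp absv 1 = 1" unfolding norm_KQp_def
      using fa fa_one G_def by (metis (no_types, lifting) prod.neutral)
    then show ?thesis using True na_one[OF na] by (auto simp: OK_units_def intro!: bexI[of _ 1])
  next
    case False
    have fin: "finite G"
    proof (rule ccontr)
      assume "infinite G"
      then show False using assms(3)[of 1] False by (simp add: G_def)
    qed
    define n where "n = card G"
    have n0: "n > 0" using fin Gal_id G_def n_def card_gt_0_iff by blast
    define H where "H i = (\<Sum>\<sigma>\<in>G. h i \<sigma>)" for i
    define c where "c i \<rho> = (of_int (H i - int n * h i (inv \<rho>)) :: 'a)" for i \<rho>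
    define L where "L i y = (\<Sum>\<rho>\<in>G. c i \<rho> * \<rho> y)" for i y
    have Lnz: "\<exists>v. L i v \<noteq> 0" if i: "i \<in> {1..r}" for i
    proof (rule ccontr)
      assume "\<nexists>v. L i v \<noteq> 0"
      then have "\<forall>\<rho>\<in>G. c i \<rho> = 0"
        using dedekind[OF fin, of "c i"] fa fa_mult fa_one unfolding L_def by blast
      moreover obtain s u where su: "s \<in> G" "u \<in> G" "h i s \<noteq> h i u"
        using assms(4)[OF i] G_def by blast
      ultimately have "c i (inv s) = 0" "c i (inv u) = 0"
        using Gal_inv G_def by auto
      moreover have "inv (inv s) = s" "inv (inv u) = u" using Gal_inv_inv su G_def by auto
      ultimately have "(of_int (H i - int n * h i s) :: 'a) = 0" "(of_int (H i - int n * h i u) :: 'a) = 0"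
        unfolding c_def by metis+
      then have "H i = int n * h i s" "H i = int n * h i u"
        by (simp_all only: of_int_eq_0_iff)
      then show False using su n0 by simp
    qed
    have lin: "L i (y + of_nat m * v) = L i y + of_nat m * L i v" for i y v m
    proof -
      have "L i (y + of_nat m * v) = (\<Sum>\<rho>\<in>G. c i \<rho> * \<rho> y + of_nat m * (c i \<rho> * \<rho> v))"
        unfolding L_def
        by (rule sum.cong) (simp_all add: fa_add[OF fa] fa_mult[OF fa] fa_of_nat[OF fa] algebra_simps)
      then show ?thesis by (simp add: L_def sum.distrib sum_distrib_left)
    qed
    obtain y where y: "\<forall>i\<in>{1..r}. L i y \<noteq> 0"
      using avoid[of "{1..r}" L, OF _ Lnz lin] by auto
    define B where "B = 1 + (\<Sum>\<rho>\<in>G. absv (\<rho> y))"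
    have B1: "B \<ge> 1" unfolding B_def using na_nonneg[OF na] by (simp add: sum_nonneg)
    have Brho: "absv (\<rho> y) \<le> B" if "\<rho> \<in> G" for \<rho>
    proof -
      have "absv (\<rho> y) \<le> (\<Sum>\<rho>\<in>G. absv (\<rho> y))"
        using that fin na_nonneg[OF na] by (intro member_le_sum) auto
      then show ?thesis unfolding B_def by simp
    qed
    define mm where "mm = Min ((\<lambda>i. absv (L i y)) ` {1..r})"
    have pos: "\<forall>a\<in>(\<lambda>i. absv (L i y)) ` {1..r}. 0 < a"
      using y na_zero_iff[OF na] na_nonneg[OF na] by (auto simp: less_le)
    have mm0: "mm > 0" unfolding mm_def using False pos by (subst Min_gr_iff) auto
    have mmle: "mm \<le> absv (L i y)" if "i \<in> {1..r}" for i
      unfolding mm_def using that by (intro Min_le) auto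
    define a0 where "a0 = absv (of_nat p :: 'a)"
    have a0: "0 < a0" "a0 < 1" using pl na_zero_iff[OF na, of "of_nat p"] na_nonneg[OF na, of "of_nat p"]
        prime_gt_0_nat[OF p] by (auto simp: a0_def le_less)
    have "0 < min (a0 / B) (mm / B^2)" using a0 B1 mm0 by simp
    then obtain k where k: "a0 ^ k < min (a0 / B) (mm / B^2)"
      using real_arch_pow_inv a0 by blast
    define s where "s = a0 ^ k"
    define t where "t = (of_nat p :: 'a) ^ k"
    have st: "absv t = s" by (simp add: t_def s_def a0_def na_power[OF na])
    have s0: "s > 0" using a0 by (simp add: s_def)
    have sB: "s * B < a0" using k B1 by (simp add: s_def field_simps)
    have sB2: "s * B^2 < mm" using k B1 by (simp add: s_def field_simps)
    define d where "d = s * B"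
    have d0: "0 \<le> d" using s0 B1 by (simp add: d_def)
    have da: "d < a0" using sB by (simp add: d_def)
    have d1: "d < 1" using da a0 by simp
    have dmm: "d ^ 2 < s * mm"
    proof -
      have "d ^ 2 = s * (s * B^2)" by (simp add: d_def power2_eq_square)
      also have "\<dots> < s * mm" using sB2 s0 by simp
      finally show ?thesis .
    qed
    interpret apx absv d using na d0 d1 by unfold_locales
    have ft: "\<rho> t = t" if "field_aut \<rho>" for \<rho>
      by (simp add: t_def fa_power[OF that] fa_of_nat[OF that])
    have small: "absv (t * \<rho> y) \<le> d" if "\<rho> \<in> G" for \<rho>
      using Brho[OF that] s0 by (simp add: na_mult[OF na] st d_def)
    define x where "x = 1 + t * y"
    have rx: "\<rho> x = 1 + t * \<rho> y" if "field_aut \<rho>" for \<rho>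
      by (simp add: x_def fa_add[OF that] fa_mult[OF that] fa_one[OF that] ft[OF that])
    have rx1: "absv (\<rho> x) = 1" if "\<rho> \<in> G" for \<rho>
      using rx[OF fa[OF that]] na_one_plus[OF na] small[OF that] d1 by simp
    have x1: "absv x = 1" using rx1[of id] Gal_id[of absv] G_def by simp
    define N where "N = (\<Prod>\<rho>\<in>G. \<rho> x)"
    have N1: "absv N = 1" unfolding N_def using rx1 by (simp add: na_prod[OF na])
    have N0: "N \<noteq> 0" using N1 na_zero[OF na] by auto
    define \<omega> where "\<omega> = x ^ n * inverse N"
    have om1: "\<omega> \<in> OK_units absv"
      by (simp add: OK_units_def \<omega>_def na_mult[OF na] na_power[OF na] na_inverse[OF na] x1 N1)
    have sN: "\<sigma> N = N" if "\<sigma> \<in> G" for \<sigma>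
    proof -
      have "\<sigma> N = (\<Prod>\<rho>\<in>G. (\<sigma> \<circ> \<rho>) x)" unfolding N_def by (simp add: fa_prod[OF fa[OF that]])
      also have "\<dots> = N" unfolding N_def using Gal_prod_lmult[of \<sigma> absv "\<lambda>u. u x"] that G_def by simp
      finally show ?thesis .
    qed
    have norm1: "norm_KQp absv \<omega> = 1"
    proof -
      have "norm_KQp absv \<omega> = (\<Prod>\<sigma>\<in>G. \<sigma> x ^ n * inverse N)"
        unfolding norm_KQp_def G_def[symmetric]
        by (rule prod.cong) (simp_all add: \<omega>_def fa_mult[OF fa] fa_power[OF fa] fa_inverse[OF fa] sN)
      also have "\<dots> = N ^ n * inverse N ^ n"
        by (simp add: prod.distrib prod_power_distrib N_def n_def)
      also have "\<dots> = 1" using N0 by (simp add: power_mult_distrib[symmetric])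
      finally show ?thesis .
    qed
    define T where "T = (\<Sum>\<rho>\<in>G. \<rho> y)"
    have psi_ap: "ap absv d (psi absv (h i) \<omega>) (t * L i y)" if i: "i \<in> {1..r}" for i
    proof -
      have each: "ap absv d (inv \<sigma> \<omega> powi (- h i \<sigma>))
                    (of_int (- h i \<sigma>) * (of_nat n * (t * inv \<sigma> y) - t * T))" if sG: "\<sigma> \<in> G" for \<sigma>
      proof -
        define \<sigma>' where "\<sigma>' = inv \<sigma>"
        have s'G: "\<sigma>' \<in> G" using Gal_inv sG G_def \<sigma>'_def by blast
        have fs: "field_aut \<sigma>'" using fa[OF s'G] .
        have e1: "\<sigma>' \<omega> = (1 + t * \<sigma>' y) ^ n * inverse (\<Prod>\<rho>\<in>G. 1 + t * (\<sigma>' \<circ> \<rho>) y)"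
          unfolding \<omega>_def N_def
          by (simp add: fa_mult[OF fs] fa_power[OF fs] fa_inverse[OF fs] fa_prod[OF fs] rx[OF fs]
              rx[OF fa] fa_add[OF fs] fa_one[OF fs] ft[OF fs] cong: prod.cong)
        have "ap absv d (1 + t * \<sigma>' y) (t * \<sigma>' y)" by (rule ap_base[OF small[OF s'G]])
        then have a1: "ap absv d ((1 + t * \<sigma>' y) ^ n) (of_nat n * (t * \<sigma>' y))" by (rule ap_pow)
        have "ap absv d (\<Prod>\<rho>\<in>G. 1 + t * (\<sigma>' \<circ> \<rho>) y) (\<Sum>\<rho>\<in>G. t * (\<sigma>' \<circ> \<rho>) y)"
          by (rule ap_prod, rule ap_base, rule small) (use s'G Gal_comp G_def in blast)
        moreover have "(\<Sum>\<rho>\<in>G. t * (\<sigma>' \<circ> \<rho>) y) = t * T"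
          unfolding T_def sum_distrib_left[symmetric]
          using Gal_sum_lmult[of \<sigma>' absv "\<lambda>u. u y"] s'G G_def by simp
        ultimately have a2: "ap absv d (inverse (\<Prod>\<rho>\<in>G. 1 + t * (\<sigma>' \<circ> \<rho>) y)) (- (t * T))"
          using ap_inv by simp
        have "ap absv d (\<sigma>' \<omega>) (of_nat n * (t * \<sigma>' y) + - (t * T))"
          unfolding e1 by (rule ap_mult[OF a1 a2])
        then have "ap absv d (\<sigma>' \<omega> powi (- h i \<sigma>)) (of_int (- h i \<sigma>) * (of_nat n * (t * \<sigma>' y) + - (t * T)))"
          by (rule ap_powi)
        then show ?thesis unfolding \<sigma>'_def by (simp only: diff_conv_add_uminus)
      qed
      have "ap absv d (psi absv (h i) \<omega>)
              (\<Sum>\<sigma>\<in>G. of_int (- h i \<sigma>) * (of_nat n * (t * inv \<sigma> y) - t * T))"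
        unfolding psi_def G_def[symmetric] by (rule ap_prod[OF each])
      moreover have "(\<Sum>\<sigma>\<in>G. of_int (- h i \<sigma>) * (of_nat n * (t * inv \<sigma> y) - t * T)) = t * L i y"
      proof -
        define A where "A = (\<Sum>\<sigma>\<in>G. of_int (h i \<sigma>) * inv \<sigma> y)"
        have lhs: "(\<Sum>\<sigma>\<in>G. of_int (- h i \<sigma>) * (of_nat n * (t * inv \<sigma> y) - t * T))
                 = t * (T * of_int (H i) - of_nat n * A)"
          by (simp add: A_def H_def algebra_simps sum_distrib_left sum_distrib_right sum_subtractf sum_negf)
        have inv_sum: "(\<Sum>\<rho>\<in>G. of_int (h i (inv \<rho>)) * \<rho> y) = A"
        proof -
          have "(\<Sum>\<rho>\<in>G. of_int (h i (inv \<rho>)) * \<rho> y) = (\<Sum>\<rho>\<in>G. (\<lambda>u. of_int (h i (inv u)) * u y) (inv \<rho>))"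
            using Gal_sum_inv[of "\<lambda>u. of_int (h i (inv u)) * u y" absv] G_def by simp
          also have "\<dots> = A" unfolding A_def
            by (rule sum.cong) (simp_all add: Gal_inv_inv G_def)
          finally show ?thesis .
        qed
        have "L i y = (\<Sum>\<rho>\<in>G. of_int (H i) * \<rho> y - of_nat n * (of_int (h i (inv \<rho>)) * \<rho> y))"
          unfolding L_def c_def by (rule sum.cong) (simp_all add: algebra_simps)
        also have "\<dots> = of_int (H i) * T - of_nat n * (\<Sum>\<rho>\<in>G. of_int (h i (inv \<rho>)) * \<rho> y)"
          by (simp add: sum_subtractf sum_distrib_left T_def)
        also have "\<dots> = T * of_int (H i) - of_nat n * A"
          using inv_sum by (simp add: mult.commute)
        finally show ?thesis using lhs by simp
      qed
      ultimately show ?thesis by simp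
    qed
    have "infinite_order (psi absv (h i) \<omega>)" if i: "i \<in> {1..r}" for i
    proof -
      define z where "z = psi absv (h i) \<omega>"
      have az: "absv (z - 1 - t * L i y) \<le> d ^ 2" "absv (t * L i y) \<le> d"
        using psi_ap[OF i] by (auto simp: ap_def z_def)
      have big: "absv (z - 1 - t * L i y) < absv (t * L i y)"
      proof -
        have "s * mm \<le> absv (t * L i y)" using mmle[OF i] s0 by (simp add: na_mult[OF na] st)
        then show ?thesis using az dmm by linarith
      qed
      have "absv (z - 1) = absv (t * L i y + (z - 1 - t * L i y))" by simp
      also have "\<dots> = absv (t * L i y)" by (rule na_dominant[OF na big])
      finally have eq: "absv (z - 1) = absv (t * L i y)" .
      have "0 < absv (t * L i y)" using big na_nonneg[OF na] by (meson le_less_trans)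
      moreover have "absv (t * L i y) < absv (of_nat p :: 'a)" using az da by (simp add: a0_def)
      ultimately show ?thesis unfolding z_def[symmetric] using no_torsion[OF na p pl] eq by simp
    qed
    then show ?thesis using om1 norm1 by blast
  qed
qed


end
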